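(* Consider the multicast coalitional game with player set $\mathcal{N}=\{1,\ldots,N\}$ and value function $$v(S)=\sum_{i\in S}U_i-\sum_{i\in S}\frac{\alpha_i}{R_S}-\frac{\beta+\gamma}{R_S},\qquad R_S=\min_{i\in S}R_i,$$ for nonempty $S\subseteq\mathcal{N}$. Suppose $R_i=R_0$ and $P_{Rx,i}=P_{Rx}$ for all $i\in\mathcal{N}$. Then the core of the game is non-empty.
   Context: A transmitter multicasts a file of size $X>0$ bits to users $\mathcal{N}=\{1,\dots,N\}$. User $i$ has valuation $U_i\in\mathbb{R}$ for the file, downloads from the transmitter at rate $R_i>0$, and consumes receive power $P_{Rx,i}>0$; the transmitter transmits at power $P_{Tx}>0$. Costs per unit energy are $a>0$ at users and $b>0$ at the transmitter, and the bandwidth cost per second is $w>0$. Set $\alpha_i=aP_{Rx,i}X$, $\beta=bP_{Tx}X$, $\gamma=wX$. This defines a transferable-utility coalitional game $(\mathcal{N},v)$ with $v$ as in the claim (coalition $S$ receives the file by multicast at rate $R_S$). The core is the set of payoff vectors $(x_1,\dots,x_N)\in\mathbb{R}^N$ with $\sum_{i\in\mathcal{N}}x_i=v(\mathcal{N})$ and $\sum_{i\in S}x_i\ge v(S)$ for every nonempty $S\subseteq\mathcal{N}$. *)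

theory Defs
  imports Main "HOL.Real"
begin

definition rate_coal :: "(nat \<Rightarrow> real) \<Rightarrow> nat set \<Rightarrow> real" where
  "rate_coal R S = Min (R ` S)"

definition mc_value ::
  "(nat \<Rightarrow> real) \<Rightarrow> (nat \<Rightarrow> real) \<Rightarrow> (nat \<Rightarrow> real) \<Rightarrow> real \<Rightarrow> real \<Rightarrow> nat set \<Rightarrow> real" where
  "mc_value U alpha R beta gamma S =
     (\<Sum>i\<in>S. U i) - (\<Sum>i\<in>S. alpha i / rate_coal R S) - (beta + gamma) / rate_coal R S"

definition core :: "nat set \<Rightarrow> (nat set \<Rightarrow> real) \<Rightarrow> (nat \<Rightarrow> real) set" where
  "core Np v = {x. (\<Sum>i\<in>Np. x i) = v Np \<and>
                   (\<forall>S. S \<subseteq> Np \<and> S \<noteq> {} \<longrightarrow> (\<Sum>i\<in>S. x i) \<ge> v S)}"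

end

theory Submission
  imports Defs
begin

theorem theorem3:
  fixes N :: nat and X a b w PTx R0 PRx :: real
    and U R P_Rx :: "nat \<Rightarrow> real"
  assumes "N \<ge> 1"
    and "X > 0" and "a > 0" and "b > 0" and "w > 0" and "PTx > 0"
    and "R0 > 0" and "PRx > 0"
    and "\<forall>i\<in>{1..N}. R i = R0"
    and "\<forall>i\<in>{1..N}. P_Rx i = PRx"
  shows "core {1..N}
           (mc_value U (\<lambda>i. a * P_Rx i * X) R (b * PTx * X) (w * X)) \<noteq> {}"
proof -
  define c where "c = a * PRx * X"
  define K where "K = b * PTx * X + w * X"
  have Kpos: "K > 0" unfolding K_def using assms by (simp add: add_pos_pos)
  have val: "mc_value U (\<lambda>i. a * P_Rx i * X) R (b * PTx * X) (w * X) S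
     = (\<Sum>i\<in>S. U i) - real (card S) * c / R0 - K / R0"
    if S: "S \<subseteq> {1..N}" "S \<noteq> {}" for S
  proof -
    have fin: "finite S" using S finite_subset by blast
    have "R ` S = {R0}" using S assms(9) by auto
    hence r: "rate_coal R S = R0" unfolding rate_coal_def by simp
    have "(\<Sum>i\<in>S. a * P_Rx i * X / R0) = (\<Sum>i\<in>S. c / R0)"
      using S assms(10) c_def by (intro sum.cong) auto
    thus ?thesis unfolding mc_value_def r K_def by simp
  qed
  define x where "x i = U i - c / R0 - K / (real N * R0)" for i
  have N0: "real N > 0" using assms(1) by simp
  have sx: "(\<Sum>i\<in>S. x i) = (\<Sum>i\<in>S. U i) - real (card S) * c / R0
              - real (card S) * K / (real N * R0)" for S
    unfolding x_def by (simp add: sum_subtractf)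
  have "x \<in> core {1..N} (mc_value U (\<lambda>i. a * P_Rx i * X) R (b * PTx * X) (w * X))"
    unfolding core_def
  proof (intro CollectI conjI allI impI)
    have "{1..N} \<noteq> {}" using assms(1) by simp
    then show "(\<Sum>i\<in>{1..N}. x i) = mc_value U (\<lambda>i. a * P_Rx i * X) R (b * PTx * X) (w * X) {1..N}"
      using N0 assms(7) by (simp add: val sx)
  next
    fix S assume S: "S \<subseteq> {1..N} \<and> S \<noteq> {}"
    have "card S \<le> card {1..N}" using S by (intro card_mono) auto
    hence cS: "real (card S) \<le> real N" by simp
    have "real (card S) * K / (real N * R0) \<le> real N * K / (real N * R0)"
      using cS Kpos assms(7) N0 by (intro divide_right_mono mult_right_mono) auto
    also have "\<dots> = K / R0" using N0 by simp
    finally show "mc_value U (\<lambda>i. a * P_Rx i * X) R (b * PTx * X) (w * X) S \<le> (\<Sum>i\<in>S. x i)"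
      using S by (simp add: val sx)
  qed
  thus ?thesis by blast
qed

end
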